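(* Let $f(x,y)=\sum_{i=0}^rf_iy^ix^{r-i}$ and $g(x,y)=\sum_{j=0}^sg_jy^jx^{s-j}$ be homogeneous polynomials of degrees $r$ and $s$. Then for $\nu\ge1$ the $\nu$-th $q$-derivative (with respect to $x$) of their $q$-product is $$\big(f(x,y)*g(x,y)\big)^{(\nu)}=\sum_{l=0}^{\nu}{\nu\brack l}q^{(\nu-l)(r-l)}f^{(l)}(x,y)*g^{(\nu-l)}(x,y).$$
   Context: $q\ge2$ is a prime power. Gaussian binomial ${\nu\brack l}=\prod_{i=0}^{l-1}\frac{q^\nu-q^i}{q^l-q^i}$ ($=1$ for $l=0$). $q$-derivative: for a real function $f$, $f^{(1)}(x)=\frac{f(qx)-f(x)}{(q-1)x}$ for $x\ne0$; for $f(x,y)$, $f^{(\nu)}$ denotes the $\nu$-fold iterate of this operator applied in the variable $x$, with $f^{(0)}=f$. $q$-product: for homogeneous polynomials $a(x,y;m)=\sum_{i=0}^{d}a_i(m)y^ix^{d-i}$ and $b(x,y;m)=\sum_{j=0}^{e}b_j(m)y^jx^{e-j}$ of degrees $d,e$, whose coefficients are real functions of a parameter $m$ (zero for indices outside the given ranges; constants allowed), $a*b=\sum_{u=0}^{d+e}c_u(m)y^ux^{d+e-u}$ with $c_u(m)=\sum_{i=0}^uq^{ie}a_i(m)b_{u-i}(m-i)$. *)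

theory Defs
  imports Complex_Main "HOL-Computational_Algebra.Primes"
begin

definition gbinom :: "nat \<Rightarrow> nat \<Rightarrow> nat \<Rightarrow> real" where
  "gbinom q \<nu> l = (\<Prod>i<l. (real q ^ \<nu> - real q ^ i) / (real q ^ l - real q ^ i))"

definition qder :: "nat \<Rightarrow> (real \<Rightarrow> real \<Rightarrow> real) \<Rightarrow> (real \<Rightarrow> real \<Rightarrow> real)" where
  "qder q F = (\<lambda>x y. (F (real q * x) y - F x y) / ((real q - 1) * x))"

definition hpoly :: "(nat \<Rightarrow> int \<Rightarrow> real) \<Rightarrow> nat \<Rightarrow> int \<Rightarrow> real \<Rightarrow> real \<Rightarrow> real" where
  "hpoly a d m x y = (\<Sum>i\<le>d. a i m * y ^ i * x ^ (d - i))"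

definition trunc :: "(nat \<Rightarrow> int \<Rightarrow> real) \<Rightarrow> nat \<Rightarrow> nat \<Rightarrow> int \<Rightarrow> real" where
  "trunc a d i m = (if i \<le> d then a i m else 0)"

definition qprod :: "nat \<Rightarrow> (nat \<Rightarrow> int \<Rightarrow> real) \<Rightarrow> nat \<Rightarrow> (nat \<Rightarrow> int \<Rightarrow> real) \<Rightarrow> nat
    \<Rightarrow> (nat \<Rightarrow> int \<Rightarrow> real)" where
  "qprod q a d b e = (\<lambda>u m. \<Sum>i\<le>u. real q ^ (i * e) * trunc a d i m * trunc b e (u - i) (m - int i))"

text \<open>The (constant) coefficients of a function F viewed as a homogeneous polynomial of degree d
  (on x \<noteq> 0); used to read the q-derivatives f^(l), g^(l) as homogeneous polynomials.\<close>
definition hcoef :: "(real \<Rightarrow> real \<Rightarrow> real) \<Rightarrow> nat \<Rightarrow> nat \<Rightarrow> int \<Rightarrow> real" where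
  "hcoef F d = (SOME c. (\<forall>i m m'. c i m = c i m') \<and>
                        (\<forall>x y. x \<noteq> 0 \<longrightarrow> F x y = hpoly c d 0 x y))"

end

theory Submission
  imports Defs
begin

definition D1 :: "nat \<Rightarrow> (real \<Rightarrow> real) \<Rightarrow> real \<Rightarrow> real" where
  "D1 q h = (\<lambda>x. (h (real q * x) - h x) / ((real q - 1) * x))"

lemma D1_Suc: "(D1 q ^^ Suc n) h x = ((D1 q ^^ n) h (real q * x) - (D1 q ^^ n) h x) / ((real q - 1) * x)"
  by (simp add: D1_def)

lemma qder_pow: "(qder q ^^ n) F x y = (D1 q ^^ n) (\<lambda>x. F x y) x"
  by (induction n arbitrary: x) (simp_all add: qder_def D1_def)

lemma D1_lin: "(D1 q ^^ n) (\<lambda>x. \<Sum>i\<in>I. c i * h i x) = (\<lambda>x. \<Sum>i\<in>I. c i * (D1 q ^^ n) (h i) x)"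
proof (induction n)
  case 0 then show ?case by simp
next
  case (Suc n)
  show ?case
    by (rule ext, simp only: D1_Suc Suc, simp add: sum_subtractf[symmetric] sum_divide_distrib right_diff_distrib)
qed

definition qf :: "nat \<Rightarrow> nat \<Rightarrow> nat \<Rightarrow> real" where
  "qf q p l = (\<Prod>t<l. (real q ^ (p - t) - 1) / (real q - 1))"

lemma qf_zero: "p < l \<Longrightarrow> qf q p l = 0"
  unfolding qf_def by (rule prod_zero) (auto intro!: bexI[of _ p])

lemma D1_pow:
  assumes q: "q \<ge> 2" shows "x \<noteq> 0 \<Longrightarrow> (D1 q ^^ l) (\<lambda>x. x ^ p) x = qf q p l * x ^ (p - l)"
proof (induction l arbitrary: x)
  case 0 then show ?case by (simp add: qf_def)
next
  case (Suc l)
  have qx: "real q * x \<noteq> 0" using Suc.prems q by simp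
  have q1: "real q - 1 \<noteq> 0" using q by simp
  have "(D1 q ^^ Suc l) (\<lambda>x. x ^ p) x
     = (qf q p l * (real q * x) ^ (p - l) - qf q p l * x ^ (p - l)) / ((real q - 1) * x)"
    by (simp only: D1_Suc Suc.IH[OF qx] Suc.IH[OF Suc.prems])
  also have "\<dots> = qf q p (Suc l) * x ^ (p - Suc l)"
  proof (cases "p - l = 0")
    case True
    then show ?thesis by (simp add: qf_def)
  next
    case False
    then obtain k where e: "p - l = Suc k" by (cases "p - l") auto
    then have e2: "p - Suc l = k" by simp
    have qs: "qf q p (Suc l) = qf q p l * ((real q ^ Suc k - 1) / (real q - 1))"
      unfolding qf_def using e by simp
    show ?thesis using Suc.prems q1
      unfolding e e2 qs by (simp add: power_mult_distrib field_simps)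
  qed
  finally show ?case .
qed

lemma Dl_hpoly:
  assumes q: "q \<ge> 2" and x: "x \<noteq> 0"
  shows "(D1 q ^^ l) (\<lambda>z. hpoly a d 0 z w) x = (\<Sum>i\<le>d. a i 0 * w ^ i * (qf q (d - i) l * x ^ (d - i - l)))"
proof -
  have "(\<lambda>z. hpoly a d 0 z w) = (\<lambda>z. \<Sum>i\<le>d. (a i 0 * w ^ i) * (\<lambda>z. z ^ (d - i)) z)"
    by (simp add: hpoly_def)
  then show ?thesis
    by (simp add: D1_lin D1_pow[OF q x])
qed

definition PP :: "nat \<Rightarrow> nat \<Rightarrow> nat \<Rightarrow> real" where
  "PP q n j = (\<Prod>i<j. real q ^ (n - i) - 1)"
definition FF :: "nat \<Rightarrow> nat \<Rightarrow> real" where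
  "FF q j = (\<Prod>i<j. real q ^ (j - i) - 1)"

lemma FF_pos: "q \<ge> 2 \<Longrightarrow> FF q j > 0"
  unfolding FF_def
proof (rule prod_pos)
  fix i assume "q \<ge> 2" "i \<in> {..<j}"
  then have "real q ^ (j - i) > 1" by (intro one_less_power) auto
  then show "0 < real q ^ (j - i) - 1" by simp
qed

lemma PP_zero: "n < j \<Longrightarrow> PP q n j = 0"
  unfolding PP_def by (rule prod_zero) (auto intro!: bexI[of _ n])

lemma gb_eq:
  assumes q: "q \<ge> 2" shows "gbinom q n j = PP q n j / FF q j"
proof -
  let ?Q = "real q"
  have Qnz: "(\<Prod>i<j. ?Q ^ i) \<noteq> 0" using q by simp
  have num: "(\<Prod>i<j. ?Q ^ n - ?Q ^ i) = (\<Prod>i<j. ?Q ^ i) * PP q n j"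
  proof (cases "j \<le> n")
    case True
    have "(\<Prod>i<j. ?Q ^ n - ?Q ^ i) = (\<Prod>i<j. ?Q ^ i * (?Q ^ (n - i) - 1))"
    proof (rule prod.cong)
      fix i assume "i \<in> {..<j}"
      then have "n = i + (n - i)" using True by simp
      then have "?Q ^ n = ?Q ^ i * ?Q ^ (n - i)" by (metis power_add)
      then show "?Q ^ n - ?Q ^ i = ?Q ^ i * (?Q ^ (n - i) - 1)" by (simp add: algebra_simps)
    qed simp
    then show ?thesis by (simp add: PP_def prod.distrib)
  next
    case False
    then have "(\<Prod>i<j. ?Q ^ n - ?Q ^ i) = 0" by (intro prod_zero) (auto intro!: bexI[of _ n])
    then show ?thesis using False PP_zero[of n j q] by simp
  qed
  have den: "(\<Prod>i<j. ?Q ^ j - ?Q ^ i) = (\<Prod>i<j. ?Q ^ i) * FF q j"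
  proof -
    have "(\<Prod>i<j. ?Q ^ j - ?Q ^ i) = (\<Prod>i<j. ?Q ^ i * (?Q ^ (j - i) - 1))"
    proof (rule prod.cong)
      fix i assume "i \<in> {..<j}"
      then have "j = i + (j - i)" by simp
      then have "?Q ^ j = ?Q ^ i * ?Q ^ (j - i)" by (metis power_add)
      then show "?Q ^ j - ?Q ^ i = ?Q ^ i * (?Q ^ (j - i) - 1)" by (simp add: algebra_simps)
    qed simp
    then show ?thesis by (simp add: FF_def prod.distrib)
  qed
  have "gbinom q n j = (\<Prod>i<j. ?Q ^ n - ?Q ^ i) / (\<Prod>i<j. ?Q ^ j - ?Q ^ i)"
    unfolding gbinom_def by (rule prod_dividef)
  also have "\<dots> = PP q n j / FF q j" using Qnz unfolding num den by (rule mult_divide_mult_cancel_left)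
  finally show ?thesis .
qed

lemma gb_0: "gbinom q n 0 = 1" by (simp add: gbinom_def)

lemma gb_top: "q \<ge> 2 \<Longrightarrow> gbinom q n (Suc n) = 0"
  by (simp add: gb_eq PP_zero)

lemma gb_pascal:
  assumes q: "q \<ge> 2"
  shows "gbinom q (Suc n) (Suc j) = gbinom q n (Suc j) + real q ^ (n - j) * gbinom q n j"
proof -
  let ?Q = "real q"
  have P1: "PP q (Suc n) (Suc j) = (?Q ^ Suc n - 1) * PP q n j"
    unfolding PP_def by (subst prod.lessThan_Suc_shift) simp
  have P2: "PP q n (Suc j) = PP q n j * (?Q ^ (n - j) - 1)"
    unfolding PP_def by simp
  have F1: "FF q (Suc j) = (?Q ^ Suc j - 1) * FF q j"
    unfolding FF_def by (subst prod.lessThan_Suc_shift) simp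
  have Fp: "FF q j > 0" using FF_pos[OF q] .
  have "1 < ?Q ^ Suc j" by (rule one_less_power) (use q in auto)
  then have Q1: "?Q ^ Suc j - 1 > 0" by simp
  show ?thesis
  proof (cases "j \<le> n")
    case True
    have e: "?Q ^ n = ?Q ^ j * ?Q ^ (n - j)"
      using True by (simp flip: power_add)
    show ?thesis unfolding gb_eq[OF q] P1 P2 F1 using Fp Q1
      by (simp add: field_simps e)
  next
    case False
    then show ?thesis unfolding gb_eq[OF q] P1 P2 F1 using PP_zero[of n j q] by simp
  qed
qed

lemma step_id:
  fixes Q x c a1 a0 b1 b0 :: real
  assumes "Q - 1 \<noteq> 0" "x \<noteq> 0" "c \<noteq> 0"
  shows "(a1 * b1 - a0 * b0) / ((Q - 1) * x) = a1 * ((b1 - b0) / ((Q - 1) * x)) + c * ((a1 - a0) / ((Q - 1) * (c * x))) * b0"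
proof -
  have h: "c * ((a1 - a0) / ((Q - 1) * (c * x))) = (a1 - a0) / ((Q - 1) * x)"
    using assms by simp
  have g: "\<And>d::real. d \<noteq> 0 \<Longrightarrow> (a1 * b1 - a0 * b0) / d = a1 * ((b1 - b0) / d) + ((a1 - a0) / d) * b0"
    by (simp add: field_simps)
  show ?thesis unfolding h using assms by (intro g) simp
qed


lemma leibniz:
  assumes q: "q \<ge> 2"
  shows "x \<noteq> 0 \<Longrightarrow> (D1 q ^^ n) (\<lambda>z. A z * B z) x
     = (\<Sum>k\<le>n. gbinom q n k * (D1 q ^^ k) A (real q ^ (n - k) * x) * (D1 q ^^ (n - k)) B x)"
proof (induction n arbitrary: x)
  case 0 then show ?case by (simp add: gb_0)
next
  case (Suc n)
  let ?Q = "real q"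
  have x: "x \<noteq> 0" by fact
  have qx: "?Q * x \<noteq> 0" using x q by simp
  have q1: "?Q - 1 \<noteq> 0" using q by simp
  define T where "T k = (D1 q ^^ k) A (?Q ^ (Suc n - k) * x) * (D1 q ^^ (Suc n - k)) B x" for k
  have "(D1 q ^^ Suc n) (\<lambda>z. A z * B z) x
     = ((\<Sum>k\<le>n. gbinom q n k * (D1 q ^^ k) A (?Q ^ (n - k) * (?Q * x)) * (D1 q ^^ (n - k)) B (?Q * x))
       - (\<Sum>k\<le>n. gbinom q n k * (D1 q ^^ k) A (?Q ^ (n - k) * x) * (D1 q ^^ (n - k)) B x)) / ((?Q - 1) * x)"
    by (simp only: D1_Suc Suc.IH[OF qx] Suc.IH[OF x])
  also have "\<dots> = (\<Sum>k\<le>n. gbinom q n k * (((D1 q ^^ k) A (?Q ^ (n - k) * (?Q * x)) * (D1 q ^^ (n - k)) B (?Q * x)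
       - (D1 q ^^ k) A (?Q ^ (n - k) * x) * (D1 q ^^ (n - k)) B x) / ((?Q - 1) * x)))"
    by (simp add: sum_subtractf[symmetric] sum_divide_distrib right_diff_distrib mult.assoc)
  also have "\<dots> = (\<Sum>k\<le>n. gbinom q n k * T k + gbinom q n k * ?Q ^ (n - k) * T (Suc k))"
  proof (rule sum.cong)
    fix k assume "k \<in> {..n}"
    then have k: "k \<le> n" by simp
    have c: "?Q ^ (n - k) \<noteq> 0" using q by simp
    have e1: "Suc n - k = Suc (n - k)" using k by simp
    have e2: "?Q ^ (n - k) * (?Q * x) = ?Q * (?Q ^ (n - k) * x)" by simp
    have "((D1 q ^^ k) A (?Q ^ (n - k) * (?Q * x)) * (D1 q ^^ (n - k)) B (?Q * x)
       - (D1 q ^^ k) A (?Q ^ (n - k) * x) * (D1 q ^^ (n - k)) B x) / ((?Q - 1) * x)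
      = T k + ?Q ^ (n - k) * T (Suc k)"
      unfolding T_def e1 D1_Suc e2 using step_id[OF q1 x c] by (simp add: mult.assoc)
    then show "gbinom q n k * (((D1 q ^^ k) A (?Q ^ (n - k) * (?Q * x)) * (D1 q ^^ (n - k)) B (?Q * x)
       - (D1 q ^^ k) A (?Q ^ (n - k) * x) * (D1 q ^^ (n - k)) B x) / ((?Q - 1) * x))
      = gbinom q n k * T k + gbinom q n k * ?Q ^ (n - k) * T (Suc k)"
      by (simp add: algebra_simps)
  qed simp
  also have "\<dots> = (\<Sum>k\<le>Suc n. gbinom q (Suc n) k * T k)"
  proof -
    have a: "(\<Sum>k\<le>Suc n. gbinom q n k * T k) = (\<Sum>k\<le>n. gbinom q n k * T k)"
      using gb_top[OF q, of n] by simp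
    have b: "(\<Sum>k\<le>Suc n. gbinom q n k * T k) = T 0 + (\<Sum>k\<le>n. gbinom q n (Suc k) * T (Suc k))"
      by (subst sum.atMost_Suc_shift) (simp add: gb_0)
    have c: "(\<Sum>k\<le>Suc n. gbinom q (Suc n) k * T k)
        = T 0 + (\<Sum>k\<le>n. gbinom q n (Suc k) * T (Suc k)) + (\<Sum>k\<le>n. gbinom q n k * ?Q ^ (n - k) * T (Suc k))"
      by (subst sum.atMost_Suc_shift) (simp add: gb_0 gb_pascal[OF q] ring_distribs sum.distrib mult_ac)
    show ?thesis by (simp only: sum.distrib c b[symmetric] a)
  qed
  finally show ?case unfolding T_def by (simp only: mult.assoc)
qed


lemma trunc_const: "\<forall>i m. a i m = a i 0 \<Longrightarrow> trunc a d i m = trunc a d i 0"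
  by (simp add: trunc_def)

lemma hpoly_qprod:
  assumes ca: "\<forall>i m. a i m = a i 0" and cb: "\<forall>j m. b j m = b j 0"
  shows "hpoly (qprod q a d b e) (d + e) m x y = hpoly a d 0 x (real q ^ e * y) * hpoly b e 0 x y"
proof -
  define H where "H i j = real q ^ (i * e) * trunc a d i 0 * trunc b e j 0 * y ^ (i + j) * x ^ (d + e - (i + j))" for i j
  have "hpoly (qprod q a d b e) (d + e) m x y = (\<Sum>u\<le>d + e. \<Sum>i\<le>u. H i (u - i))"
    unfolding hpoly_def qprod_def H_def
  proof (rule sum.cong[OF refl])
    fix u assume "u \<in> {..d + e}"
    show "(\<Sum>i\<le>u. real q ^ (i * e) * trunc a d i m * trunc b e (u - i) (m - int i)) * y ^ u * x ^ (d + e - u) =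
          (\<Sum>i\<le>u. real q ^ (i * e) * trunc a d i 0 * trunc b e (u - i) 0 * y ^ (i + (u - i)) * x ^ (d + e - (i + (u - i))))"
      unfolding sum_distrib_right
      by (rule sum.cong[OF refl]) (auto simp: trunc_const[OF ca, of d _ m] trunc_const[OF cb, of e _ "m - _"])
  qed
  also have "\<dots> = (\<Sum>(i, j)\<in>{(i, j). i + j \<le> d + e}. H i j)"
    by (rule sum.triangle_reindex_eq[symmetric])
  also have "\<dots> = (\<Sum>(i, j)\<in>{..d} \<times> {..e}. H i j)"
  proof (rule sum.mono_neutral_right)
    show "finite {(i, j). i + j \<le> d + e}"
      by (rule finite_subset[of _ "{..d+e} \<times> {..d+e}"]) auto
    show "{..d} \<times> {..e} \<subseteq> {(i, j). i + j \<le> d + e}" by auto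
    show "\<forall>p\<in>{(i, j). i + j \<le> d + e} - {..d} \<times> {..e}. (case p of (i, j) \<Rightarrow> H i j) = 0"
      by (auto simp: H_def trunc_def split: if_splits)
  qed
  also have "\<dots> = (\<Sum>i\<le>d. \<Sum>j\<le>e. H i j)"
    by (rule sum.cartesian_product[symmetric])
  also have "\<dots> = hpoly a d 0 x (real q ^ e * y) * hpoly b e 0 x y"
    unfolding hpoly_def sum_product
  proof (intro sum.cong refl)
    fix i j assume i: "i \<in> {..d}" and j: "j \<in> {..e}"
    have ex: "d + e - (i + j) = (d - i) + (e - j)" using i j by simp
    show "H i j = a i 0 * (real q ^ e * y) ^ i * x ^ (d - i) * (b j 0 * y ^ j * x ^ (e - j))"
      using i j unfolding H_def
      apply (simp only: ex power_add)
      by (simp add: trunc_def power_add power_mult_distrib mult.commute[of i e] power_mult mult_ac)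
  qed
  finally show ?thesis .
qed

lemma Fexpl:
  assumes q: "q \<ge> 2" and x: "x \<noteq> 0"
  shows "(qder q ^^ l) (hpoly (\<lambda>i _. a i) d 0) x w = (\<Sum>i\<le>d. a i * w ^ i * (qf q (d - i) l * x ^ (d - i - l)))"
  by (simp add: qder_pow Dl_hpoly[OF q x])

lemma hcoef_D:
  fixes a :: "nat \<Rightarrow> real" and d l :: nat
  assumes q: "q \<ge> 2"
  defines "F \<equiv> (qder q ^^ l) (hpoly (\<lambda>i _. a i) d 0)"
  shows "(\<forall>i m m'. hcoef F (d - l) i m = hcoef F (d - l) i m') \<and>
         (\<forall>x y. x \<noteq> 0 \<longrightarrow> F x y = hpoly (hcoef F (d - l)) (d - l) 0 x y)"
proof -
  have ex: "\<exists>c. (\<forall>i m m'. c i m = c i m') \<and> (\<forall>x y. x \<noteq> 0 \<longrightarrow> F x y = hpoly c (d - l) 0 x y)"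
  proof (intro exI[of _ "\<lambda>i _. a i * qf q (d - i) l"] conjI allI impI)
    fix x y :: real assume x: "x \<noteq> 0"
    have "F x y = (\<Sum>i\<le>d. a i * y ^ i * (qf q (d - i) l * x ^ (d - i - l)))"
      unfolding F_def by (rule Fexpl[OF q x])
    also have "\<dots> = (\<Sum>i\<le>d - l. a i * y ^ i * (qf q (d - i) l * x ^ (d - i - l)))"
    proof (rule sum.mono_neutral_right)
      show "\<forall>i\<in>{..d} - {..d - l}. a i * y ^ i * (qf q (d - i) l * x ^ (d - i - l)) = 0"
        by (auto simp: qf_zero)
    qed auto
    also have "\<dots> = hpoly (\<lambda>i _. a i * qf q (d - i) l) (d - l) 0 x y"
      unfolding hpoly_def
    proof (intro sum.cong refl)
      fix i
      have e: "d - i - l = d - l - i" by arith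
      show "a i * y ^ i * (qf q (d - i) l * x ^ (d - i - l)) = a i * qf q (d - i) l * y ^ i * x ^ (d - l - i)"
        unfolding e by (simp add: mult_ac)
    qed
    finally show "F x y = hpoly (\<lambda>i _. a i * qf q (d - i) l) (d - l) 0 x y" .
  qed simp
  have "(\<lambda>c. (\<forall>i m m'. c i m = c i m') \<and> (\<forall>x y. x \<noteq> 0 \<longrightarrow> F x y = hpoly c (d - l) 0 x y)) (hcoef F (d - l))"
    unfolding hcoef_def by (rule someI_ex[OF ex])
  then show ?thesis by simp
qed


theorem lemma4:
  fixes q :: nat and f g :: "nat \<Rightarrow> real" and r s \<nu> :: nat
    and x y :: real and m :: int
  assumes "\<exists>p k. prime p \<and> 0 < k \<and> q = p ^ k"
    and "1 \<le> \<nu>"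
    and "x \<noteq> 0"
  shows "(qder q ^^ \<nu>) (\<lambda>x y. hpoly (qprod q (\<lambda>i _. f i) r (\<lambda>j _. g j) s) (r + s) m x y) x y
       = (\<Sum>l\<le>\<nu>. gbinom q \<nu> l * real q powi ((int \<nu> - int l) * (int r - int l))
            * hpoly (qprod q (hcoef ((qder q ^^ l) (hpoly (\<lambda>i _. f i) r 0)) (r - l)) (r - l)
                             (hcoef ((qder q ^^ (\<nu> - l)) (hpoly (\<lambda>j _. g j) s 0)) (s - (\<nu> - l)))
                             (s - (\<nu> - l)))
                    ((r - l) + (s - (\<nu> - l))) m x y)"
proof -
  obtain p k where pk: "prime p" "0 < k" "q = p ^ k" using assms(1) by blast
  have "p \<le> p ^ k" using pk prime_ge_2_nat[OF pk(1)] by (intro self_le_power) auto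
  then have q: "q \<ge> 2" using pk prime_ge_2_nat[OF pk(1)] by simp
  have x: "x \<noteq> 0" by fact
  let ?Q = "real q"
  define F where "F z = hpoly (\<lambda>i _. f i) r 0 z (?Q ^ s * y)" for z
  define G where "G z = hpoly (\<lambda>j _. g j) s 0 z y" for z
  have "(qder q ^^ \<nu>) (\<lambda>x y. hpoly (qprod q (\<lambda>i _. f i) r (\<lambda>j _. g j) s) (r + s) m x y) x y
      = (D1 q ^^ \<nu>) (\<lambda>z. F z * G z) x"
    unfolding qder_pow F_def G_def by (simp add: hpoly_qprod)
  also have "\<dots> = (\<Sum>l\<le>\<nu>. gbinom q \<nu> l * (D1 q ^^ l) F (?Q ^ (\<nu> - l) * x) * (D1 q ^^ (\<nu> - l)) G x)"
    by (rule leibniz[OF q x])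
  also have "\<dots> = (\<Sum>l\<le>\<nu>. gbinom q \<nu> l * real q powi ((int \<nu> - int l) * (int r - int l))
            * hpoly (qprod q (hcoef ((qder q ^^ l) (hpoly (\<lambda>i _. f i) r 0)) (r - l)) (r - l)
                             (hcoef ((qder q ^^ (\<nu> - l)) (hpoly (\<lambda>j _. g j) s 0)) (s - (\<nu> - l)))
                             (s - (\<nu> - l)))
                    ((r - l) + (s - (\<nu> - l))) m x y)"
  proof (rule sum.cong[OF refl])
    fix l assume l: "l \<in> {..\<nu>}"
    define k where "k = \<nu> - l"
    define FL where "FL = (qder q ^^ l) (hpoly (\<lambda>i _. f i) r 0)"
    define GK where "GK = (qder q ^^ k) (hpoly (\<lambda>j _. g j) s 0)"
    have hF: "(\<forall>i m m'. hcoef FL (r - l) i m = hcoef FL (r - l) i m') \<and>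
         (\<forall>x y. x \<noteq> 0 \<longrightarrow> FL x y = hpoly (hcoef FL (r - l)) (r - l) 0 x y)"
      unfolding FL_def by (rule hcoef_D[OF q])
    have hG: "(\<forall>i m m'. hcoef GK (s - k) i m = hcoef GK (s - k) i m') \<and>
         (\<forall>x y. x \<noteq> 0 \<longrightarrow> GK x y = hpoly (hcoef GK (s - k)) (s - k) 0 x y)"
      unfolding GK_def by (rule hcoef_D[OF q])
    have rhs: "hpoly (qprod q (hcoef FL (r - l)) (r - l) (hcoef GK (s - k)) (s - k)) ((r - l) + (s - k)) m x y
        = FL x (?Q ^ (s - k) * y) * GK x y"
    proof -
      have cF: "\<forall>i m. hcoef FL (r - l) i m = hcoef FL (r - l) i 0" using hF by blast
      have cG: "\<forall>i m. hcoef GK (s - k) i m = hcoef GK (s - k) i 0" using hG by blast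
      have r1: "FL x w = hpoly (hcoef FL (r - l)) (r - l) 0 x w" for w using hF x by blast
      have r2: "GK x y = hpoly (hcoef GK (s - k)) (s - k) 0 x y" using hG x by blast
      show ?thesis by (simp only: hpoly_qprod[OF cF cG] r1 r2)
    qed
    have gk: "(D1 q ^^ k) G x = GK x y" unfolding G_def GK_def by (simp add: qder_pow)
    have Qkx: "?Q ^ k * x \<noteq> 0" using q x by simp
    have fl: "(D1 q ^^ l) F (?Q ^ k * x) = (\<Sum>i\<le>r. f i * (?Q ^ s * y) ^ i * (qf q (r - i) l * (?Q ^ k * x) ^ (r - i - l)))"
      unfolding F_def by (simp add: Dl_hpoly[OF q Qkx])
    have flx: "FL x w = (\<Sum>i\<le>r. f i * w ^ i * (qf q (r - i) l * x ^ (r - i - l)))" for w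
      unfolding FL_def by (rule Fexpl[OF q x])
    have gkx: "GK x y = (\<Sum>j\<le>s. g j * y ^ j * (qf q (s - j) k * x ^ (s - j - k)))"
      unfolding GK_def by (rule Fexpl[OF q x])
    have key: "(D1 q ^^ l) F (?Q ^ k * x) * GK x y
        = ?Q powi ((int \<nu> - int l) * (int r - int l)) * FL x (?Q ^ (s - k) * y) * GK x y"
    proof (cases "s < k")
      case True
      then have "GK x y = 0" unfolding gkx by (auto simp: qf_zero intro!: sum.neutral)
      then show ?thesis by simp
    next
      case sk: False
      show ?thesis
      proof (cases "r < l")
        case True
        then have "(D1 q ^^ l) F (?Q ^ k * x) = 0" "FL x (?Q ^ (s - k) * y) = 0"
          unfolding fl flx by (auto simp: qf_zero intro!: sum.neutral)
        then show ?thesis by simp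
      next
        case rl: False
        have ie: "(int \<nu> - int l) * (int r - int l) = int (k * (r - l))"
          using l rl by (simp add: k_def of_nat_diff)
        have pw: "?Q powi ((int \<nu> - int l) * (int r - int l)) = ?Q ^ (k * (r - l))" unfolding ie by (rule power_int_of_nat)
        have "(D1 q ^^ l) F (?Q ^ k * x) = ?Q ^ (k * (r - l)) * FL x (?Q ^ (s - k) * y)"
          unfolding fl flx sum_distrib_left
        proof (rule sum.cong[OF refl])
          fix i assume i: "i \<in> {..r}"
          show "f i * (?Q ^ s * y) ^ i * (qf q (r - i) l * (?Q ^ k * x) ^ (r - i - l))
              = ?Q ^ (k * (r - l)) * (f i * (?Q ^ (s - k) * y) ^ i * (qf q (r - i) l * x ^ (r - i - l)))"
          proof (cases "r - i < l")
            case True then show ?thesis by (simp add: qf_zero)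
          next
            case False
            define t where "t = r - i - l"
            have t: "r = i + l + t" using i False unfolding t_def by simp
            define s' where "s' = s - k"
            have s': "s = k + s'" using sk unfolding s'_def by simp
            have ee: "s * i + k * t = k * (i + t) + s' * i" unfolding s' by (simp add: algebra_simps)
            have e: "?Q ^ (s * i) * ?Q ^ (k * t) = ?Q ^ (k * (i + t)) * ?Q ^ (s' * i)"
              by (simp only: power_add[symmetric] ee)
            have e2: "r - i - l = t" "r - l = i + t" "s - k = s'" using t s' by auto
            have e3a: "(?Q ^ s * y) ^ i * (?Q ^ k * x) ^ t = ((?Q ^ s) ^ i * (?Q ^ k) ^ t) * (y^i * x^t)"
              by (simp add: power_mult_distrib mult_ac)
            have e3b: "?Q ^ (k * (i + t)) * ((?Q ^ s' * y) ^ i * x ^ t) = ((?Q ^ k) ^ (i + t) * (?Q ^ s') ^ i) * (y^i * x^t)"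
              by (simp add: power_mult_distrib power_mult mult_ac)
            have e': "(?Q ^ s) ^ i * (?Q ^ k) ^ t = (?Q ^ k) ^ (i + t) * (?Q ^ s') ^ i"
              by (simp only: power_mult[symmetric] e)
            have e3: "(?Q ^ s * y) ^ i * (?Q ^ k * x) ^ t = ?Q ^ (k * (i + t)) * ((?Q ^ s' * y) ^ i * x ^ t)"
              unfolding e3a e3b e' ..
            have "f i * (?Q ^ s * y) ^ i * (qf q (r - i) l * (?Q ^ k * x) ^ t)
                = f i * qf q (r - i) l * ((?Q ^ s * y) ^ i * (?Q ^ k * x) ^ t)" by (simp only: mult_ac)
            also have "\<dots> = f i * qf q (r - i) l * (?Q ^ (k * (i + t)) * ((?Q ^ s' * y) ^ i * x ^ t))"
              by (simp only: e3)
            also have "\<dots> = ?Q ^ (k * (i + t)) * (f i * (?Q ^ s' * y) ^ i * (qf q (r - i) l * x ^ t))"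
              by (simp only: mult_ac)
            finally show ?thesis unfolding e2 .
          qed
        qed
        then show ?thesis unfolding pw by (simp only: mult.assoc)
      qed
    qed
    show "gbinom q \<nu> l * (D1 q ^^ l) F (?Q ^ (\<nu> - l) * x) * (D1 q ^^ (\<nu> - l)) G x =
         gbinom q \<nu> l * real q powi ((int \<nu> - int l) * (int r - int l))
            * hpoly (qprod q (hcoef ((qder q ^^ l) (hpoly (\<lambda>i _. f i) r 0)) (r - l)) (r - l)
                             (hcoef ((qder q ^^ (\<nu> - l)) (hpoly (\<lambda>j _. g j) s 0)) (s - (\<nu> - l)))
                             (s - (\<nu> - l)))
                    ((r - l) + (s - (\<nu> - l))) m x y"
      unfolding k_def[symmetric] FL_def[symmetric] GK_def[symmetric] rhs gk
      using key by (simp only: mult.assoc)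
  qed
  finally show ?thesis .
qed


end
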